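(* Define integers $a(n)$ by $\sum_{n\ge0}a(n)q^n=\frac{f_1f_6}{f_2^2f_3}$. Then for all $n\ge 0$, $a(2n)\equiv 1\pmod 2$ if $n=0$ or $n$ is a perfect square not divisible by $3$, and $a(2n)\equiv 0\pmod 2$ otherwise.
   Context: For a positive integer $r$, $f_r=\prod_{k\geq1}(1-q^{rk})$, a formal power series in $q$. *)

theory Defs
  imports "HOL-Computational_Algebra.Formal_Power_Series"
begin

text \<open>f_r = prod_{k>=1} (1 - q^(r k)) as a formal power series over the integers.
  The coefficient of q^n of the infinite product is the coefficient of q^n of the
  finite partial product over k = 1..n (factors with k > n only affect degrees > n
  when r >= 1).\<close>
definition eta_f :: "nat \<Rightarrow> int fps" where
  "eta_f r = Abs_fps (\<lambda>n. fps_nth (\<Prod>k\<in>{1..n}. (1 - fps_X ^ (r * k))) n)"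

text \<open>The series sum a(n) q^n = f_1 f_6 / (f_2^2 f_3): the unique integer power series A
  with A * (f_2^2 f_3) = f_1 f_6 (f_2^2 f_3 has constant term 1, so it is a unit).\<close>
definition gen_A :: "int fps" where
  "gen_A = (THE A. A * (eta_f 2 ^ 2 * eta_f 3) = eta_f 1 * eta_f 6)"

definition a_coeff :: "nat \<Rightarrow> int" where
  "a_coeff n = fps_nth gen_A n"

end

theory Submission
  imports Defs "HOL-Library.Z2" "HOL-Library.Groups_Big_Fun"
begin
unbundle fps_syntax


lemma bit_add_self [simp]: "(x::bit) + x = 0"
  by (cases x) simp_all

lemma bit_mult_self [simp]: "(x::bit) * x = x"
  by (cases x) simp_all

lemma bitfps_add_self [simp]: "(F::bit fps) + F = 0"
  by (rule fps_ext) (simp only: fps_add_nth bit_add_self fps_zero_nth)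

lemma of_int_bit: "(of_int z :: bit) = (if even z then 0 else 1)"
proof (cases "even z")
  case True
  then obtain k where "z = 2 * k" by (elim evenE)
  then show ?thesis by simp
next
  case False
  then obtain k where "z = 2 * k + 1" by (elim oddE)
  then show ?thesis by simp
qed

lemma inv_sum:
  fixes f :: "'a \<Rightarrow> bit"
  assumes "finite S" "\<And>x. x \<in> S \<Longrightarrow> \<sigma> x \<in> S \<and> \<sigma> (\<sigma> x) = x \<and> f (\<sigma> x) = f x"
  shows "sum f S = sum f {x\<in>S. \<sigma> x = x}"
  using assms
proof (induction "card S" arbitrary: S rule: less_induct)
  case less
  show ?case
  proof (cases "\<forall>x\<in>S. \<sigma> x = x")
    case True
    then have "{x\<in>S. \<sigma> x = x} = S" by auto
    then show ?thesis by simp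
  next
    case False
    then obtain x where x: "x \<in> S" "\<sigma> x \<noteq> x" by auto
    define S' where "S' = S - {x, \<sigma> x}"
    have sx: "\<sigma> x \<in> S" using less.prems x by auto
    have fin: "finite S'" using less.prems S'_def by auto
    have inv: "\<sigma> y \<in> S' \<and> \<sigma> (\<sigma> y) = y \<and> f (\<sigma> y) = f y" if y: "y \<in> S'" for y
    proof -
      have yS: "y \<in> S" "y \<noteq> x" "y \<noteq> \<sigma> x" using y S'_def by auto
      have p: "\<sigma> y \<in> S" "\<sigma> (\<sigma> y) = y" "f (\<sigma> y) = f y" using less.prems(2)[OF yS(1)] by auto
      have "\<sigma> y \<noteq> x" using p(2) yS(3) by auto
      moreover have "\<sigma> y \<noteq> \<sigma> x" using p(2) yS(2) less.prems(2)[OF x(1)] by metis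
      ultimately show ?thesis using p S'_def by auto
    qed
    have card: "card S' < card S" unfolding S'_def using x(1) less.prems(1)
      by (intro psubset_card_mono) auto
    have IH: "sum f S' = sum f {y\<in>S'. \<sigma> y = y}" using less.hyps[OF card fin inv] by simp
    have "S = insert x (insert (\<sigma> x) S')" using x sx S'_def by auto
    have nx: "x \<notin> insert (\<sigma> x) S'" using x(2) S'_def by auto
    have nsx: "\<sigma> x \<notin> S'" using S'_def by auto
    have "sum f S = sum f (insert x (insert (\<sigma> x) S'))" using \<open>S = _\<close> by simp
    also have "\<dots> = f x + sum f (insert (\<sigma> x) S')" using fin nx by (intro sum.insert) simp_all
    also have "sum f (insert (\<sigma> x) S') = f (\<sigma> x) + sum f S'" using fin nsx by (intro sum.insert) simp_all
    finally have "sum f S = f x + f (\<sigma> x) + sum f S'" by (simp only: add.assoc)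
    also have "f (\<sigma> x) = f x" using less.prems x by auto
    finally have "sum f S = sum f S'" by (simp only: bit_add_self add_0)
    moreover have "{y\<in>S. \<sigma> y = y} = {y\<in>S'. \<sigma> y = y}"
      using x less.prems unfolding S'_def by auto
    ultimately show ?thesis using IH by simp
  qed
qed

lemma frob_nth:
  fixes F :: "bit fps"
  shows "(F^2) $ n = (if even n then F $ (n div 2) else 0)"
proof -
  have "(F^2) $ n = (\<Sum>i=0..n. F$i * F$(n-i))" by (simp add: power2_eq_square fps_mult_nth)
  also have "\<dots> = (\<Sum>i\<in>{i\<in>{0..n}. n - i = i}. F$i * F$(n-i))"
    by (rule inv_sum[where \<sigma>="\<lambda>i. n - i"]) (auto simp: mult.commute)
  finally have eq: "(F^2) $ n = (\<Sum>i\<in>{i\<in>{0..n}. n - i = i}. F$i * F$(n-i))" .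
  show ?thesis
  proof (cases "even n")
    case True
    then obtain k where k: "n = 2*k" by (elim evenE)
    have "{i\<in>{0..n}. n - i = i} = {k}" using k by auto
    then show ?thesis using eq k by (simp add: bit_mult_self)
  next
    case False
    then have e: "{i\<in>{0..n}. n - i = i} = {}" by auto presburger
    have "(F^2) $ n = 0" using eq unfolding e by (simp only: sum.empty)
    then show ?thesis using False by simp
  qed
qed



definition agree :: "nat \<Rightarrow> 'a::zero fps \<Rightarrow> 'a fps \<Rightarrow> bool" where
  "agree n F G \<longleftrightarrow> (\<forall>i\<le>n. F$i = G$i)"

lemma agree_refl [simp]: "agree n F F" by (simp add: agree_def)
lemma agree_sym: "agree n F G \<Longrightarrow> agree n G F" by (simp add: agree_def)
lemma agree_trans: "agree n F G \<Longrightarrow> agree n G H \<Longrightarrow> agree n F H" by (simp add: agree_def)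
lemma agree_mono: "agree n F G \<Longrightarrow> m \<le> n \<Longrightarrow> agree m F G" by (simp add: agree_def)
lemma agree_add: "agree n F G \<Longrightarrow> agree n F' G' \<Longrightarrow> agree n (F + F') (G + G' :: 'a::monoid_add fps)"
  by (simp add: agree_def)
lemma agree_mult:
  fixes F G F' G' :: "'a::comm_semiring_1 fps"
  shows "agree n F G \<Longrightarrow> agree n F' G' \<Longrightarrow> agree n (F * F') (G * G')"
  unfolding agree_def fps_mult_nth by (auto intro!: sum.cong)
lemma agree_power:
  fixes F G :: "'a::comm_semiring_1 fps"
  shows "agree n F G \<Longrightarrow> agree n (F ^ k) (G ^ k)"
  by (induction k) (auto intro: agree_mult)
lemma agree_all: "(\<And>n. agree n F G) \<Longrightarrow> F = G"
  by (rule fps_ext) (auto simp: agree_def)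

lemma agree_prod:
  fixes u v :: "'b \<Rightarrow> 'a::comm_semiring_1 fps"
  shows "finite K \<Longrightarrow> (\<And>k. k \<in> K \<Longrightarrow> agree n (u k) (v k)) \<Longrightarrow> agree n (prod u K) (prod v K)"
  by (induction K rule: finite_induct) (auto intro: agree_mult)

lemma agree_cancel:
  fixes U V W :: "'a::field fps"
  assumes "agree n (U * W) (V * W)" "W $ 0 \<noteq> 0"
  shows "agree n U V"
proof -
  have "agree n (U * W * inverse W) (V * W * inverse W)" by (rule agree_mult[OF assms(1) agree_refl])
  moreover have "W * inverse W = 1" using assms(2) by (simp add: inverse_mult_eq_1')
  ultimately show ?thesis by (metis mult.assoc mult_1_right)
qed

lemma agree_Xpow_zero: "n < m \<Longrightarrow> agree n (fps_X ^ m * F) (0::'a::comm_semiring_1 fps)"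
  by (simp add: agree_def fps_X_power_mult_nth)

lemma agree_one_plus: "n < m \<Longrightarrow> agree n (1 + fps_X ^ m) (1::'a::comm_semiring_1 fps)"
  by (simp add: agree_def)

definition red :: "int fps \<Rightarrow> bit fps" where
  "red F = Abs_fps (\<lambda>n. of_int (F $ n))"

lemma red_nth [simp]: "red F $ n = of_int (F $ n)" by (simp add: red_def)
lemma red_add: "red (F + G) = red F + red G" by (rule fps_ext) simp
lemma red_mult: "red (F * G) = red F * red G"
  by (rule fps_ext) (simp add: fps_mult_nth)
lemma red_one: "red 1 = 1" by (rule fps_ext) simp
lemma red_power: "red (F ^ k) = red F ^ k"
  by (induction k) (simp_all add: red_one red_mult)
lemma red_prod: "finite K \<Longrightarrow> red (prod u K) = (\<Prod>k\<in>K. red (u k))"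
  by (induction K rule: finite_induct) (simp_all add: red_one red_mult)
lemma red_factor: "red (1 - fps_X ^ m) = 1 + fps_X ^ m"
  by (rule fps_ext) (simp add: of_int_bit)

definition Pr :: "nat \<Rightarrow> nat \<Rightarrow> bit fps" where
  "Pr r N = (\<Prod>k\<in>{1..N}. (1 + fps_X ^ (r * k)))"

definition P :: "nat \<Rightarrow> bit fps" where
  "P r = red (eta_f r)"

lemma red_eta_prod: "red (\<Prod>k\<in>{1..N}. (1 - fps_X ^ (r * k))) = Pr r N"
  unfolding Pr_def by (simp add: red_prod red_factor)

lemma P_nth: "P r $ n = Pr r n $ n"
proof -
  have "P r $ n = of_int ((\<Prod>k\<in>{1..n}. (1 - fps_X ^ (r * k)) :: int fps) $ n)"
    by (simp add: P_def eta_f_def)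
  also have "\<dots> = red (\<Prod>k\<in>{1..n}. (1 - fps_X ^ (r * k))) $ n" by simp
  finally show ?thesis by (simp only: red_eta_prod)
qed

lemma Pr_stable:
  assumes "r \<ge> 1" "n \<le> N"
  shows "agree n (Pr r N) (Pr r n)"
proof -
  have split: "{1..N} = {1..n} \<union> {n<..N}" using assms(2) by auto
  have "Pr r N = Pr r n * (\<Prod>k\<in>{n<..N}. (1 + fps_X ^ (r * k)))"
    unfolding Pr_def split by (rule prod.union_disjoint) auto
  moreover have "agree n (\<Prod>k\<in>{n<..N}. (1 + fps_X ^ (r * k))) (\<Prod>k\<in>{n<..N}. (1::bit fps))"
  proof (rule agree_prod)
    fix k assume "k \<in> {n<..N}"
    then have "n < r * k" using assms(1)
      by (metis greaterThanAtMost_iff less_le_trans mult_1 mult_le_mono1)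
    then show "agree n (1 + fps_X ^ (r * k)) 1" by (simp add: agree_def)
  qed simp
  ultimately show ?thesis using agree_mult[OF agree_refl[of n "Pr r n"]] by fastforce
qed

lemma P_agree:
  assumes "r \<ge> 1" "n \<le> N"
  shows "agree n (P r) (Pr r N)"
  unfolding agree_def
proof (intro allI impI)
  fix i assume "i \<le> n"
  have "P r $ i = Pr r i $ i" by (rule P_nth)
  also have "\<dots> = Pr r N $ i" using Pr_stable[OF assms(1), of i N] \<open>i \<le> n\<close> assms(2)
    by (simp add: agree_def)
  finally show "P r $ i = Pr r N $ i" .
qed

lemma P_0 [simp]: "P r $ 0 = 1"
  by (simp add: P_nth Pr_def)

lemma two_bitfps: "(2::bit fps) = 0"
  by (metis bitfps_add_self one_add_one)

lemma sq_plus: "(1 + Y)^2 = 1 + Y^2" for Y :: "bit fps"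
proof -
  have "(1 + Y)^2 = 1^2 + Y^2 + 2 * 1 * Y" by (rule power2_sum)
  then show ?thesis by (simp add: two_bitfps)
qed

lemma Pr_double: "Pr (2 * r) N = (Pr r N)^2"
proof -
  have "(Pr r N)^2 = (\<Prod>k\<in>{1..N}. (1 + fps_X ^ (r * k))^2)" by (simp add: Pr_def prod_power_distrib)
  also have "\<dots> = (\<Prod>k\<in>{1..N}. (1 + fps_X ^ (2 * r * k)))"
    by (intro prod.cong refl) (simp add: sq_plus power_mult[symmetric] mult.commute mult.left_commute)
  finally show ?thesis by (simp add: Pr_def mult.assoc)
qed

lemma P_double: "r \<ge> 1 \<Longrightarrow> P (2 * r) = (P r)^2"
proof (rule agree_all)
  fix n assume r: "r \<ge> 1"
  have "agree n (P (2 * r)) (Pr (2 * r) n)" using r by (intro P_agree) auto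
  moreover have "agree n ((Pr r n)^2) ((P r)^2)"
    by (intro agree_power agree_sym[OF P_agree]) (use r in auto)
  ultimately show "agree n (P (2 * r)) ((P r)^2)" unfolding Pr_double by (rule agree_trans)
qed

lemma eta_f_0 [simp]: "eta_f r $ 0 = 1"
  by (simp add: eta_f_def)

lemma gen_A_eq: "gen_A * (eta_f 2 ^ 2 * eta_f 3) = eta_f 1 * eta_f 6"
proof -
  define D :: "int fps" where "D = eta_f 2 ^ 2 * eta_f 3"
  have D0: "D $ 0 = 1" by (simp add: D_def fps_power_zeroth)
  define R where "R = fps_right_inverse D 1"
  have DR: "D * R = 1" unfolding R_def by (rule fps_right_inverse) (simp add: D0)
  define A0 where "A0 = eta_f 1 * eta_f 6 * R"
  have A0: "A0 * D = eta_f 1 * eta_f 6" unfolding A0_def using DR by (simp add: mult.assoc mult.commute[of R])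
  have Dnz: "D \<noteq> 0" using D0 by auto
  have "gen_A = A0" unfolding gen_A_def D_def[symmetric]
  proof (rule the_equality)
    show "A0 * D = eta_f 1 * eta_f 6" by (rule A0)
    fix A assume "A * D = eta_f 1 * eta_f 6"
    with A0 have "A * D = A0 * D" by simp
    with Dnz show "A = A0" by simp
  qed
  with A0 show ?thesis by (simp add: D_def)
qed



fun gb :: "nat \<Rightarrow> nat \<Rightarrow> nat \<Rightarrow> bit fps" where
  "gb c n 0 = 1"
| "gb c 0 (Suc k) = 0"
| "gb c (Suc n) (Suc k) = gb c n k + fps_X ^ (c * Suc k) * gb c n (Suc k)"

lemma gb_gt: "n < k \<Longrightarrow> gb c n k = 0"
  by (induction c n k rule: gb.induct) auto

lemma gb_diag: "gb c n n = 1"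
  by (induction n) (auto simp: gb_gt)

lemma Pr_0 [simp]: "Pr c 0 = 1" by (simp add: Pr_def)

lemma Pr_Suc: "Pr c (Suc M) = Pr c M * (1 + fps_X ^ (c * Suc M))"
  unfolding Pr_def by (simp add: atLeastAtMostSuc_conv mult.commute)

lemma Pr_nth0 [simp]: "c > 0 \<Longrightarrow> Pr c M $ 0 = 1"
  by (induction M) (simp_all add: Pr_Suc)

lemma Pr_nz: "c > 0 \<Longrightarrow> Pr c M \<noteq> 0"
  using Pr_nth0[of c M] by (metis one_neq_zero fps_zero_nth)

lemma c2a: "(x::bit fps) * (1 + y) + x * (y + z) = x * (1 + z)"
proof -
  have "x * (1 + y) + x * (y + z) = x * (1 + z) + (x * y + x * y)" by (simp only: algebra_simps)
  then show ?thesis by (simp only: bitfps_add_self add_0_right)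
qed

lemma c2b: "(x::bit fps) * (y + z) + x * (1 + y) = x * (1 + z)"
  using c2a[of x y z] by (simp add: add.commute)

lemma gb_prod: "k \<le> n \<Longrightarrow> gb c n k * Pr c k * Pr c (n - k) = Pr c n"
proof (induction n arbitrary: k)
  case 0
  then show ?case by simp
next
  case (Suc n)
  show ?case
  proof (cases k)
    case 0
    then show ?thesis by simp
  next
    case (Suc k')
    with Suc.prems have k'n: "k' \<le> n" by simp
    have t1: "gb c n k' * Pr c (Suc k') * Pr c (Suc n - Suc k') = Pr c n * (1 + fps_X ^ (c * Suc k'))"
    proof -
      have "gb c n k' * Pr c (Suc k') * Pr c (Suc n - Suc k')
          = (gb c n k' * Pr c k' * Pr c (n - k')) * (1 + fps_X ^ (c * Suc k'))"
        by (simp add: Pr_Suc ac_simps)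
      then show ?thesis using Suc.IH[OF k'n] by simp
    qed
    have t2: "fps_X ^ (c * Suc k') * gb c n (Suc k') * Pr c (Suc k') * Pr c (Suc n - Suc k')
        = Pr c n * (fps_X ^ (c * Suc k') + fps_X ^ (c * Suc n))"
    proof (cases "k' = n")
      case True
      then show ?thesis by (simp add: gb_gt)
    next
      case False
      with k'n have lt: "Suc k' \<le> n" by simp
      have e: "Suc n - Suc k' = Suc (n - Suc k')" using lt by simp
      have e2: "Suc (n - Suc k') = n - k'" using lt by simp
      have pr: "Pr c (Suc n - Suc k') = Pr c (n - Suc k') * (1 + fps_X ^ (c * (n - k')))"
        using Pr_Suc[of c "n - Suc k'"] e e2 by simp
      have "fps_X ^ (c * Suc k') * gb c n (Suc k') * Pr c (Suc k') * Pr c (Suc n - Suc k')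
          = fps_X ^ (c * Suc k') * (gb c n (Suc k') * Pr c (Suc k') * Pr c (n - Suc k'))
             * (1 + fps_X ^ (c * (n - k')))"
        unfolding pr by (simp only: ac_simps)
      also have "\<dots> = fps_X ^ (c * Suc k') * Pr c n * (1 + fps_X ^ (c * (n - k')))"
        using Suc.IH[OF lt] by simp
      also have "\<dots> = Pr c n * (fps_X ^ (c * Suc k') + fps_X ^ (c * Suc k' + c * (n - k')))"
        by (simp only: power_add distrib_left distrib_right mult_1_right mult_1_left mult_ac)
      also have "c * Suc k' + c * (n - k') = c * Suc n" using k'n
        by (simp add: add_mult_distrib2[symmetric])
      finally show ?thesis .
    qed
    have "gb c (Suc n) k * Pr c k * Pr c (Suc n - k)
        = gb c n k' * Pr c (Suc k') * Pr c (Suc n - Suc k')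
          + fps_X ^ (c * Suc k') * gb c n (Suc k') * Pr c (Suc k') * Pr c (Suc n - Suc k')"
      unfolding Suc by (simp only: gb.simps distrib_right distrib_left mult_ac)
    also have "\<dots> = Pr c n * (1 + fps_X ^ (c * Suc k')) + Pr c n * (fps_X ^ (c * Suc k') + fps_X ^ (c * Suc n))"
      using t1 t2 by simp
    also have "\<dots> = Pr c n * (1 + fps_X ^ (c * Suc n))" by (rule c2a)
    also have "\<dots> = Pr c (Suc n)" by (simp add: Pr_Suc)
    finally show ?thesis .
  qed
qed

lemma gb_B:
  assumes "c > 0"
  shows "gb c (Suc n) (Suc k) = fps_X ^ (c * (n - k)) * gb c n k + gb c n (Suc k)"
proof (cases "k \<le> n")
  case False
  then show ?thesis by (simp add: gb_gt)
next
  case True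
  define W where "W = Pr c (Suc k) * Pr c (n - k)"
  have Wnz: "W \<noteq> 0" unfolding W_def using \<open>c > 0\<close> by (simp add: Pr_nz)
  have L: "gb c (Suc n) (Suc k) * W = Pr c (Suc n)"
    using gb_prod[of "Suc k" "Suc n" c] True unfolding W_def by (simp add: mult.assoc)
  have r1: "fps_X ^ (c * (n - k)) * gb c n k * W = Pr c n * (fps_X ^ (c * (n - k)) + fps_X ^ (c * Suc n))"
  proof -
    have "fps_X ^ (c * (n - k)) * gb c n k * W = fps_X ^ (c * (n - k)) * (gb c n k * Pr c k * Pr c (n - k)) * (1 + fps_X ^ (c * Suc k))"
      unfolding W_def Pr_Suc by (simp add: ac_simps)
    also have "\<dots> = fps_X ^ (c * (n - k)) * Pr c n * (1 + fps_X ^ (c * Suc k))"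
      using gb_prod[OF True] by simp
    also have "\<dots> = Pr c n * (fps_X ^ (c * (n - k)) + fps_X ^ (c * (n - k) + c * Suc k))"
      by (simp only: power_add distrib_left distrib_right mult_1_right mult_1_left mult_ac)
    also have "c * (n - k) + c * Suc k = c * Suc n" using True
      by (simp add: add_mult_distrib2[symmetric])
    finally show ?thesis .
  qed
  have "(fps_X ^ (c * (n - k)) * gb c n k + gb c n (Suc k)) * W = Pr c (Suc n)"
  proof (cases "k = n")
    case True
    then show ?thesis using r1 by (simp add: gb_gt Pr_Suc distrib_right)
  next
    case False
    with True have lt: "Suc k \<le> n" by simp
    have e2: "n - k = Suc (n - Suc k)" using lt by simp
    have r2: "gb c n (Suc k) * W = Pr c n * (1 + fps_X ^ (c * (n - k)))"
    proof -
      have "gb c n (Suc k) * W = (gb c n (Suc k) * Pr c (Suc k) * Pr c (n - Suc k)) * (1 + fps_X ^ (c * (n - k)))"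
        unfolding W_def e2 Pr_Suc[of c "n - Suc k"] by (simp add: ac_simps)
      then show ?thesis using gb_prod[OF lt] by simp
    qed
    have "(fps_X ^ (c * (n - k)) * gb c n k + gb c n (Suc k)) * W
        = Pr c n * (fps_X ^ (c * (n - k)) + fps_X ^ (c * Suc n)) + Pr c n * (1 + fps_X ^ (c * (n - k)))"
      using r1 r2 by (simp add: distrib_right)
    also have "\<dots> = Pr c n * (1 + fps_X ^ (c * Suc n))" by (rule c2b)
    finally show ?thesis by (simp add: Pr_Suc)
  qed
  with L have "gb c (Suc n) (Suc k) * W = (fps_X ^ (c * (n - k)) * gb c n k + gb c n (Suc k)) * W"
    by (simp only:)
  with Wnz show ?thesis by (metis mult_cancel_right)
qed

definition gz :: "nat \<Rightarrow> nat \<Rightarrow> int \<Rightarrow> bit fps" where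
  "gz c M j = (if j < 0 then 0 else gb c M (nat j))"

lemma gz_gt: "int M < j \<Longrightarrow> gz c M j = 0"
  by (simp add: gz_def gb_gt)

lemma gz_neg: "j < 0 \<Longrightarrow> gz c M j = 0"
  by (simp add: gz_def)

lemma rec3:
  assumes c: "c > 0"
  shows "gz c (M + 2) (j + 1) = (1 + fps_X ^ (c * (M + 1))) * gz c M j
     + fps_X ^ (c * nat (int M + 1 - j)) * gz c M (j - 1)
     + fps_X ^ (c * nat (j + 1)) * gz c M (j + 1)"
proof (cases "j < -1")
  case True
  then show ?thesis by (simp add: gz_def)
next
  case False
  show ?thesis
  proof (cases "j = -1")
    case True
    then show ?thesis by (simp add: gz_def)
  next
    case False
    with \<open>\<not> j < -1\<close> have j0: "j \<ge> 0" by simp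
    define i where "i = nat j"
    have ji: "j = int i" using j0 i_def by simp
    have A: "gz c (M + 2) (j + 1) = gb c (Suc M) i + fps_X ^ (c * Suc i) * gb c (Suc M) (Suc i)"
      unfolding gz_def ji by (simp add: nat_add_distrib)
    have B1: "gb c (Suc M) (Suc i) = fps_X ^ (c * (M - i)) * gb c M i + gb c M (Suc i)"
      using c by (rule gb_B)
    have C: "fps_X ^ (c * Suc i) * (fps_X ^ (c * (M - i)) * gb c M i) = fps_X ^ (c * (M + 1)) * gb c M i"
    proof (cases "i \<le> M")
      case True
      then have "c * Suc i + c * (M - i) = c * (M + 1)" by (simp add: add_mult_distrib2[symmetric])
      then show ?thesis by (simp add: power_add[symmetric] mult.assoc[symmetric])
    next
      case False
      then show ?thesis by (simp add: gb_gt)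
    qed
    have D: "gb c (Suc M) i = gb c M i + fps_X ^ (c * nat (int M + 1 - j)) * gz c M (j - 1)"
    proof (cases i)
      case 0
      then show ?thesis using ji by (simp add: gz_def)
    next
      case (Suc i')
      have "gb c (Suc M) i = fps_X ^ (c * (M - i')) * gb c M i' + gb c M i"
        unfolding Suc using c by (rule gb_B)
      moreover have "gz c M (j - 1) = gb c M i'" using ji Suc by (simp add: gz_def)
      moreover have "nat (int M + 1 - j) = M - i'" using ji Suc by simp
      ultimately show ?thesis by (simp add: add.commute)
    qed
    have E: "gz c M j = gb c M i" "gz c M (j + 1) = gb c M (Suc i)" "nat (j + 1) = Suc i"
      using ji by (simp_all add: gz_def nat_add_distrib)
    have "gz c (M + 2) (j + 1) = (gb c M i + fps_X ^ (c * nat (int M + 1 - j)) * gz c M (j - 1))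
       + fps_X ^ (c * (M + 1)) * gb c M i + fps_X ^ (c * Suc i) * gb c M (Suc i)"
      unfolding A B1 D distrib_left C by (simp only: add_ac)
    then show ?thesis unfolding E by (simp only: distrib_right mult_1_left add_ac)
  qed
qed



definition Tri :: "int \<Rightarrow> int" where "Tri k = k * (k + 1) div 2"

lemma Tri_succ: "Tri (k + 1) = Tri k + k + 1"
proof -
  have "(k + 1) * (k + 1 + 1) = k * (k + 1) + 2 * (k + 1)" by (simp add: algebra_simps)
  then show ?thesis unfolding Tri_def by simp
qed

lemma Tri_nonneg: "Tri k \<ge> 0"
proof -
  have "k * (k + 1) \<ge> 0"
  proof (cases "k \<ge> 0")
    case True then show ?thesis by simp
  next
    case False then have "k \<le> -1" by simp
    then show ?thesis by (simp add: mult_nonpos_nonpos)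
  qed
  then show ?thesis unfolding Tri_def by simp
qed

lemma Tri_sq: "Tri k + Tri (k - 1) = k * k"
proof -
  have "Tri k = Tri (k - 1) + k" using Tri_succ[of "k - 1"] by simp
  moreover have "2 * Tri (k - 1) = (k - 1) * k"
  proof -
    have "even ((k - 1) * k)" by simp
    then show ?thesis unfolding Tri_def by simp
  qed
  ultimately show ?thesis by (simp add: algebra_simps)
qed

definition ee :: "nat \<Rightarrow> nat \<Rightarrow> int \<Rightarrow> int" where
  "ee a b k = int a * Tri k + int b * Tri (k - 1)"

lemma ee_nonneg: "ee a b k \<ge> 0"
  unfolding ee_def using Tri_nonneg[of k] Tri_nonneg[of "k - 1"] by simp

lemma ee_succ: "ee a b (k + 1) = ee a b k + int a * (k + 1) + int b * k"
  unfolding ee_def using Tri_succ[of k] Tri_succ[of "k - 1"] by (simp add: algebra_simps)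

lemma ee_ge: "a \<ge> 1 \<Longrightarrow> b \<ge> 1 \<Longrightarrow> ee a b k \<ge> k * k"
proof -
  assume ab: "a \<ge> 1" "b \<ge> 1"
  have "int a * Tri k \<ge> Tri k" using ab Tri_nonneg[of k] by (simp add: mult_le_cancel_right1)
  moreover have "int b * Tri (k - 1) \<ge> Tri (k - 1)" using ab Tri_nonneg[of "k - 1"] by (simp add: mult_le_cancel_right1)
  ultimately show ?thesis unfolding ee_def using Tri_sq[of k] by simp
qed

definition tt :: "nat \<Rightarrow> nat \<Rightarrow> int \<Rightarrow> bit fps" where
  "tt a b k = fps_X ^ nat (ee a b k)"

definition LL :: "nat \<Rightarrow> nat \<Rightarrow> nat \<Rightarrow> bit fps" where
  "LL a b N = (\<Prod>m\<in>{1..N}. (1 + fps_X ^ (a + (m - 1) * (a + b))) * (1 + fps_X ^ (b + (m - 1) * (a + b))))"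

lemma LL_Suc: "LL a b (Suc N) = LL a b N * ((1 + fps_X ^ (a + N * (a + b))) * (1 + fps_X ^ (b + N * (a + b))))"
  unfolding LL_def by (simp add: atLeastAtMostSuc_conv mult.commute)

lemma fin_supp: "(\<And>k::int. k < lo \<or> k > hi \<Longrightarrow> f k = 0) \<Longrightarrow> finite {k. f k \<noteq> 0}"
  by (rule finite_subset[of _ "{lo..hi}"]) (auto simp: not_less[symmetric])

lemma tt_shift1:
  assumes "k \<le> int N"
  shows "fps_X ^ ((a + b) * nat (int N - k)) * tt a b (k + 1) = tt a b k * fps_X ^ (a + N * (a + b))"
proof -
  have "int ((a + b) * nat (int N - k) + nat (ee a b (k + 1))) = int (nat (ee a b k) + (a + N * (a + b)))"
    using assms ee_nonneg[of a b k] ee_nonneg[of a b "k+1"] ee_succ[of a b k] by (simp add: algebra_simps)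
  then have "(a + b) * nat (int N - k) + nat (ee a b (k + 1)) = nat (ee a b k) + (a + N * (a + b))"
    by (simp only: of_nat_eq_iff)
  then show ?thesis unfolding tt_def by (simp add: power_add[symmetric])
qed

lemma tt_shift2:
  assumes "k + int N \<ge> 0"
  shows "fps_X ^ ((a + b) * nat (k + int N)) * tt a b (k - 1) = tt a b k * fps_X ^ (b + N * (a + b))"
proof -
  have s: "ee a b k = ee a b (k - 1) + int a * k + int b * (k - 1)"
    using ee_succ[of a b "k - 1"] by simp
  have "int ((a + b) * nat (k + int N) + nat (ee a b (k - 1))) = int (nat (ee a b k) + (b + N * (a + b)))"
    using assms ee_nonneg[of a b k] ee_nonneg[of a b "k - 1"] s by (simp add: algebra_simps)
  then have "(a + b) * nat (k + int N) + nat (ee a b (k - 1)) = nat (ee a b k) + (b + N * (a + b))"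
    by (simp only: of_nat_eq_iff)
  then show ?thesis unfolding tt_def by (simp add: power_add[symmetric])
qed

lemma finite_JTP:
  assumes c: "a + b > 0"
  shows "LL a b N = Sum_any (\<lambda>k. gz (a + b) (2 * N) (k + int N) * tt a b k)"
proof (induction N)
  case 0
  have eq: "(\<lambda>k. gz (a + b) (2 * 0) (k + int 0) * tt a b k) = (\<lambda>k. if k = 0 then tt a b k else 0)"
    by (auto simp: gz_def fun_eq_iff gb_gt)
  show ?case unfolding eq Sum_any.delta by (simp add: LL_def tt_def ee_def Tri_def)
next
  case (Suc N)
  define c where "c = a + b"
  have cpos: "c > 0" using c c_def by simp
  define F where "F k = gz c (2 * N) (k + int N) * tt a b k" for k
  define u where "u = (fps_X ^ (a + N * c) :: bit fps)"
  define v where "v = (fps_X ^ (b + N * c) :: bit fps)"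
  have uv: "u * v = fps_X ^ (c * (2 * N + 1))"
    unfolding u_def v_def c_def by (simp add: power_add[symmetric] algebra_simps)
  have fac: "(1 + u) * (1 + v) = (1 + fps_X ^ (c * (2 * N + 1))) + u + v"
    by (simp only: distrib_left distrib_right mult_1_left mult_1_right uv add_ac)
  have gz0: "gz c (2 * N) j = 0" if "j < 0 \<or> j > int (2 * N)" for j
    using that gz_neg gz_gt by auto
  have finF: "finite {k. F k \<noteq> 0}"
    by (rule fin_supp[of "- int N" "int N"]) (auto simp: F_def gz0)
  have fin1: "finite {k. F k * w \<noteq> 0}" for w
    by (rule fin_supp[of "- int N" "int N"]) (auto simp: F_def gz0)
  define T1 where "T1 k = (1 + fps_X ^ (c * (2 * N + 1))) * gz c (2 * N) (k + int N) * tt a b k" for k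
  define T2 where "T2 k = fps_X ^ (c * nat (int (2 * N) + 1 - (k + int N))) * gz c (2 * N) (k + int N - 1) * tt a b k" for k
  define T3 where "T3 k = fps_X ^ (c * nat (k + int N + 1)) * gz c (2 * N) (k + int N + 1) * tt a b k" for k
  have finT1: "finite {k. T1 k \<noteq> 0}"
    by (rule fin_supp[of "- int N - 2" "int N + 2"]) (auto simp: T1_def gz0)
  have finT2: "finite {k. T2 k \<noteq> 0}"
    by (rule fin_supp[of "- int N - 2" "int N + 2"]) (auto simp: T2_def gz0)
  have finT3: "finite {k. T3 k \<noteq> 0}"
    by (rule fin_supp[of "- int N - 2" "int N + 2"]) (auto simp: T3_def gz0)
  have finT12: "finite {k. T1 k + T2 k \<noteq> 0}"
    by (rule fin_supp[of "- int N - 2" "int N + 2"]) (auto simp: T1_def T2_def gz0)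
  have rhs: "gz c (2 * Suc N) (k + int (Suc N)) * tt a b k = T1 k + T2 k + T3 k" for k
  proof -
    have "gz c (2 * N + 2) ((k + int N) + 1) = (1 + fps_X ^ (c * (2 * N + 1))) * gz c (2 * N) (k + int N)
     + fps_X ^ (c * nat (int (2 * N) + 1 - (k + int N))) * gz c (2 * N) (k + int N - 1)
     + fps_X ^ (c * nat (k + int N + 1)) * gz c (2 * N) (k + int N + 1)"
      using rec3[OF cpos, of "2 * N" "k + int N"] by simp
    then show ?thesis unfolding T1_def T2_def T3_def by (simp add: algebra_simps)
  qed
  have S2: "Sum_any T2 = Sum_any (\<lambda>k. F k * u)"
  proof (rule Sum_any.reindex_cong[of "\<lambda>k. k + 1"])
    show "bij (\<lambda>k::int. k + 1)" by (rule bijI) (auto simp: inj_def surj_def intro: exI[of _ "_ - 1"])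
    show "T2 \<circ> (\<lambda>k. k + 1) = (\<lambda>k. F k * u)"
    proof
      fix k
      show "(T2 \<circ> (\<lambda>k. k + 1)) k = F k * u"
      proof (cases "k \<le> int N")
        case True
        have e: "int (2 * N) + 1 - (k + 1 + int N) = int N - k" by simp
        have "(T2 \<circ> (\<lambda>k. k + 1)) k = gz c (2 * N) (k + int N) * (fps_X ^ (c * nat (int N - k)) * tt a b (k + 1))"
          unfolding T2_def comp_def e by (simp add: algebra_simps)
        also have "\<dots> = gz c (2 * N) (k + int N) * (tt a b k * u)"
          unfolding c_def u_def using tt_shift1[OF True, of a b] by (simp add: c_def)
        finally show ?thesis by (simp add: F_def mult.assoc)
      next
        case False
        then show ?thesis by (simp add: T2_def F_def gz0)
      qed
    qed
  qed
  have S3: "Sum_any T3 = Sum_any (\<lambda>k. F k * v)"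
  proof (rule Sum_any.reindex_cong[of "\<lambda>k. k - 1"])
    show "bij (\<lambda>k::int. k - 1)" by (rule bijI) (auto simp: inj_def surj_def intro: exI[of _ "_ + 1"])
    show "T3 \<circ> (\<lambda>k. k - 1) = (\<lambda>k. F k * v)"
    proof
      fix k
      show "(T3 \<circ> (\<lambda>k. k - 1)) k = F k * v"
      proof (cases "k + int N \<ge> 0")
        case True
        have e: "k - 1 + int N + 1 = k + int N" by simp
        have "(T3 \<circ> (\<lambda>k. k - 1)) k = gz c (2 * N) (k + int N) * (fps_X ^ (c * nat (k + int N)) * tt a b (k - 1))"
          unfolding T3_def comp_def e by (simp add: algebra_simps)
        also have "\<dots> = gz c (2 * N) (k + int N) * (tt a b k * v)"
          unfolding c_def v_def using tt_shift2[OF True, of a b] by (simp add: c_def)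
        finally show ?thesis by (simp add: F_def mult.assoc)
      next
        case False
        then show ?thesis by (simp add: T3_def F_def gz0)
      qed
    qed
  qed
  have "LL a b (Suc N) = Sum_any F * ((1 + u) * (1 + v))"
    using Suc.IH unfolding LL_Suc F_def u_def v_def c_def by simp
  also have "\<dots> = Sum_any F * (1 + fps_X ^ (c * (2 * N + 1))) + Sum_any F * u + Sum_any F * v"
    unfolding fac by (simp add: distrib_left)
  also have "Sum_any F * (1 + fps_X ^ (c * (2 * N + 1))) = Sum_any T1"
    unfolding Sum_any_left_distrib[OF finF] by (rule Sum_any.cong) (simp add: T1_def F_def ac_simps)
  also have "Sum_any F * u = Sum_any T2" unfolding S2 by (rule Sum_any_left_distrib[OF finF])
  also have "Sum_any F * v = Sum_any T3" unfolding S3 by (rule Sum_any_left_distrib[OF finF])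
  also have "Sum_any T1 + Sum_any T2 + Sum_any T3 = Sum_any (\<lambda>k. T1 k + T2 k + T3 k)"
    by (simp add: Sum_any.distrib[OF finT1 finT2] Sum_any.distrib[OF finT12 finT3])
  also have "\<dots> = Sum_any (\<lambda>k. gz (a + b) (2 * Suc N) (k + int (Suc N)) * tt a b k)"
    using rhs unfolding c_def by simp
  finally show ?case .
qed



definition theta :: "'b set \<Rightarrow> ('b \<Rightarrow> int) \<Rightarrow> bit fps" where
  "theta S e = Abs_fps (\<lambda>n. of_nat (card {x\<in>S. e x = int n}))"

lemma theta_nth: "theta S e $ n = of_nat (card {x\<in>S. e x = int n})"
  by (simp add: theta_def)

definition proper :: "('b \<Rightarrow> int) \<Rightarrow> bool" where
  "proper e \<longleftrightarrow> (\<forall>N. finite {x. e x \<le> N})"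

lemma proper_fiber: "proper e \<Longrightarrow> finite {x\<in>S. e x = n}"
  unfolding proper_def by (rule finite_subset[of _ "{x. e x \<le> n}"]) auto

lemma sum_indicator_bit: "finite K \<Longrightarrow> (\<Sum>k\<in>K. if Pp k then (1::bit) else 0) = of_nat (card {k\<in>K. Pp k})"
  by (simp add: sum.inter_filter[symmetric])

lemma sum_monomials_theta:
  assumes "finite K" "\<And>k. k \<in> K \<Longrightarrow> e k \<ge> 0"
  shows "(\<Sum>k\<in>K. fps_X ^ nat (e k)) = theta K e"
proof (rule fps_ext)
  fix n
  have "(\<Sum>k\<in>K. fps_X ^ nat (e k) :: bit fps) $ n = (\<Sum>k\<in>K. if e k = int n then (1::bit) else 0)"
    unfolding fps_sum_nth using assms(2) by (intro sum.cong) auto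
  also have "\<dots> = of_nat (card {k\<in>K. e k = int n})" using assms(1) by (rule sum_indicator_bit)
  finally show "(\<Sum>k\<in>K. fps_X ^ nat (e k)) $ n = theta K e $ n" by (simp add: theta_nth)
qed

lemma theta_trunc:
  assumes "\<And>x. x \<in> S \<Longrightarrow> e x \<le> int n \<Longrightarrow> x \<in> K" "K \<subseteq> S"
  shows "agree n (theta K e) (theta S e)"
  unfolding agree_def theta_nth
proof (intro allI impI)
  fix i assume "i \<le> n"
  then have "{x\<in>K. e x = int i} = {x\<in>S. e x = int i}" using assms by force
  then show "of_nat (card {x\<in>K. e x = int i}) = (of_nat (card {x\<in>S. e x = int i}) :: bit)" by simp
qed

lemma agree_sum:
  fixes f g :: "'b \<Rightarrow> 'a::comm_monoid_add fps"
  shows "finite K \<Longrightarrow> (\<And>k. k \<in> K \<Longrightarrow> agree n (f k) (g k)) \<Longrightarrow> agree n (sum f K) (sum g K)"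
  by (induction K rule: finite_induct) (auto intro: agree_add)

lemma abs_le_sq: "\<bar>k::int\<bar> \<le> k * k"
proof (cases "k = 0")
  case False
  then have "1 \<le> \<bar>k\<bar>" by simp
  then have "\<bar>k\<bar> * 1 \<le> \<bar>k\<bar> * \<bar>k\<bar>" by (intro mult_left_mono) auto
  then show ?thesis by (simp add: abs_mult[symmetric])
qed simp

lemma gb_W:
  assumes c: "c \<ge> 1" and j: "j \<le> M" "n \<le> j" "n \<le> M - j"
  shows "agree n (gb c M j * Pr c n) 1"
proof -
  define W where "W = Pr c n"
  have a1: "agree n (Pr c j) W" "agree n (Pr c (M - j)) W" "agree n (Pr c M) W"
    unfolding W_def using Pr_stable c j by auto
  have "agree n (gb c M j * Pr c j * Pr c (M - j)) (gb c M j * W * W)"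
    using a1 by (intro agree_mult) auto
  then have "agree n (gb c M j * W * W) W"
    unfolding gb_prod[OF j(1)] using a1(3) by (meson agree_sym agree_trans)
  then have "agree n (gb c M j * W * W) (1 * W)" by simp
  moreover have "W $ 0 \<noteq> 0" unfolding W_def using c by simp
  ultimately show ?thesis unfolding W_def[symmetric] by (rule agree_cancel)
qed

lemma JTP:
  assumes ab: "a \<ge> 1" "b \<ge> 1" and N: "2 * n \<le> N"
  shows "agree n (LL a b N * Pr (a + b) N) (theta UNIV (ee a b))"
proof -
  define c where "c = a + b"
  have c1: "c \<ge> 1" using ab c_def by simp
  define W where "W = Pr c N"
  define f where "f k = gz c (2 * N) (k + int N) * tt a b k" for k
  have gz0: "gz c (2 * N) j = 0" if "j < 0 \<or> j > int (2 * N)" for j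
    using that gz_neg gz_gt by auto
  have finf: "finite {k. f k \<noteq> 0}"
    by (rule fin_supp[of "- int N" "int N"]) (auto simp: f_def gz0)
  have supp: "{k. f k * W \<noteq> 0} \<subseteq> {- int N..int N}"
    by (auto simp: f_def gz0 not_less[symmetric])
  have fj: "LL a b N = Sum_any f" using finite_JTP[of a b N] ab unfolding f_def c_def by simp
  have "LL a b N * W = Sum_any (\<lambda>k. f k * W)"
    by (simp only: fj Sum_any_left_distrib[OF finf])
  also have "\<dots> = (\<Sum>k\<in>{- int N..int N}. f k * W)"
    by (rule Sum_any.expand_superset) (use supp in auto)
  finally have L: "LL a b N * W = (\<Sum>k\<in>{- int N..int N}. f k * W)" .
  define g where "g k = (if \<bar>k\<bar> \<le> int n then tt a b k else 0)" for k
  have tm: "agree n (f k * W) (g k)" if k: "k \<in> {- int N..int N}" for k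
  proof (cases "ee a b k \<le> int n")
    case False
    then have big: "n < nat (ee a b k)" by simp
    have "agree n (fps_X ^ nat (ee a b k) * (gz c (2 * N) (k + int N) * W)) 0"
      using big by (rule agree_Xpow_zero)
    moreover have "agree n 0 (g k)"
    proof (cases "\<bar>k\<bar> \<le> int n")
      case True
      then show ?thesis using agree_sym[OF agree_Xpow_zero[OF big, of 1]] by (simp add: g_def tt_def)
    qed (simp add: g_def)
    ultimately show ?thesis by (auto simp: f_def tt_def ac_simps intro: agree_trans)
  next
    case True
    have "\<bar>k\<bar> \<le> k * k" by (rule abs_le_sq)
    also have "k * k \<le> ee a b k" using ee_ge ab by auto
    finally have kn: "\<bar>k\<bar> \<le> int n" using True by simp
    define j where "j = nat (k + int N)"
    have j: "j \<le> 2 * N" "n \<le> j" "n \<le> 2 * N - j" using kn k N unfolding j_def by auto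
    have gzj: "gz c (2 * N) (k + int N) = gb c (2 * N) j" unfolding gz_def j_def using kn N by auto
    have "agree n (gb c (2 * N) j * Pr c n) 1" by (rule gb_W[OF c1 j])
    moreover have "agree n (Pr c N) (Pr c n)" using Pr_stable c1 N by auto
    ultimately have "agree n (gb c (2 * N) j * W) 1" unfolding W_def
      by (meson agree_mult agree_refl agree_sym agree_trans)
    then have "agree n (gb c (2 * N) j * W * tt a b k) (1 * tt a b k)" by (rule agree_mult) simp
    then show ?thesis unfolding f_def gzj by (simp add: g_def kn ac_simps)
  qed
  have "agree n (\<Sum>k\<in>{- int N..int N}. f k * W) (\<Sum>k\<in>{- int N..int N}. g k)"
    by (rule agree_sum) (use tm in auto)
  moreover have "(\<Sum>k\<in>{- int N..int N}. g k) = (\<Sum>k\<in>{- int n..int n}. tt a b k)"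
  proof -
    have "(\<Sum>k\<in>{- int N..int N}. g k) = (\<Sum>k\<in>{- int n..int n}. g k)"
      by (rule sum.mono_neutral_right) (use N in \<open>auto simp: g_def\<close>)
    also have "\<dots> = (\<Sum>k\<in>{- int n..int n}. tt a b k)" by (rule sum.cong) (auto simp: g_def)
    finally show ?thesis .
  qed
  moreover have "(\<Sum>k\<in>{- int n..int n}. tt a b k) = theta {- int n..int n} (ee a b)"
    unfolding tt_def by (rule sum_monomials_theta) (auto simp: ee_nonneg)
  moreover have "agree n (theta {- int n..int n} (ee a b)) (theta UNIV (ee a b))"
  proof (rule theta_trunc)
    fix x :: int assume "ee a b x \<le> int n"
    moreover have "\<bar>x\<bar> \<le> x * x" by (rule abs_le_sq)
    moreover have "x * x \<le> ee a b x" using ee_ge ab by auto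
    ultimately show "x \<in> {- int n..int n}" by auto
  qed auto
  ultimately show ?thesis using L unfolding W_def c_def by (metis agree_trans)
qed



lemma theta_shift:
  assumes "\<And>x. x \<in> S \<Longrightarrow> e x \<ge> 0"
  shows "fps_X * theta S e = theta S (\<lambda>x. e x + 1)"
proof (rule fps_ext)
  fix n
  show "(fps_X * theta S e) $ n = theta S (\<lambda>x. e x + 1) $ n"
  proof (cases n)
    case 0
    have "{x\<in>S. e x + 1 = 0} = {}" using assms by force
    then have "card {x\<in>S. e x + 1 = 0} = 0" by (simp only: card.empty)
    then show ?thesis using 0 by (simp add: theta_nth)
  next
    case (Suc m)
    have "{x\<in>S. e x + 1 = int n} = {x\<in>S. e x = int m}" using Suc by auto
    then show ?thesis using Suc by (simp add: theta_nth)
  qed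
qed

lemma theta_bij:
  assumes "bij_betw h S T" "\<And>x. x \<in> S \<Longrightarrow> f (h x) = e x"
  shows "theta S e = theta T f"
proof (rule fps_ext)
  fix n
  have "h ` {x\<in>S. e x = int n} = {y\<in>T. f y = int n}"
    using assms by (auto simp: bij_betw_def)
  moreover have "inj_on h {x\<in>S. e x = int n}"
    using assms(1) by (auto simp: bij_betw_def intro: inj_on_subset)
  ultimately have "card {y\<in>T. f y = int n} = card {x\<in>S. e x = int n}"
    by (metis card_image)
  then show "theta S e $ n = theta T f $ n" by (simp add: theta_nth)
qed

lemma theta_union:
  assumes "S \<inter> T = {}" "proper e"
  shows "theta (S \<union> T) e = theta S e + theta T e"
proof (rule fps_ext)
  fix n
  have "{x\<in>S \<union> T. e x = int n} = {x\<in>S. e x = int n} \<union> {x\<in>T. e x = int n}" by auto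
  moreover have "card ({x\<in>S. e x = int n} \<union> {x\<in>T. e x = int n})
      = card {x\<in>S. e x = int n} + card {x\<in>T. e x = int n}"
    by (rule card_Un_disjoint) (use assms proper_fiber in auto)
  ultimately show "theta (S \<union> T) e $ n = (theta S e + theta T e) $ n" by (simp add: theta_nth)
qed

lemma theta_inv:
  assumes "proper e" "\<And>x. x \<in> S \<Longrightarrow> \<sigma> x \<in> S \<and> \<sigma> (\<sigma> x) = x \<and> e (\<sigma> x) = e x"
  shows "theta S e = theta {x\<in>S. \<sigma> x = x} e"
proof (rule fps_ext)
  fix n
  define A where "A = {x\<in>S. e x = int n}"
  have fin: "finite A" unfolding A_def using assms(1) by (rule proper_fiber)
  have "(of_nat (card A) :: bit) = (\<Sum>x\<in>A. 1)" by simp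
  also have "\<dots> = (\<Sum>x\<in>{x\<in>A. \<sigma> x = x}. 1)"
    by (rule inv_sum[OF fin]) (use assms(2) in \<open>auto simp: A_def\<close>)
  also have "\<dots> = of_nat (card {x\<in>A. \<sigma> x = x})" by simp
  also have "{x\<in>A. \<sigma> x = x} = {x\<in>{x\<in>S. \<sigma> x = x}. e x = int n}" by (auto simp: A_def)
  finally show "theta S e $ n = theta {x\<in>S. \<sigma> x = x} e $ n" by (simp add: theta_nth A_def)
qed

lemma theta_empty [simp]: "theta {} e = 0"
  by (rule fps_ext) (simp add: theta_nth)

lemma theta_mult:
  assumes "proper e" "proper f" "\<And>x. e x \<ge> 0" "\<And>y. f y \<ge> 0"
  shows "theta S e * theta T f = theta (S \<times> T) (\<lambda>(x, y). e x + f y)"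
proof (rule fps_ext)
  fix n
  define A where "A i = {x\<in>S. e x = int i}" for i
  define B where "B i = {y\<in>T. f y = int i}" for i
  have finA: "finite (A i)" for i unfolding A_def using assms(1) by (rule proper_fiber)
  have finB: "finite (B i)" for i unfolding B_def using assms(2) by (rule proper_fiber)
  have "(theta S e * theta T f) $ n = (\<Sum>i=0..n. of_nat (card (A i)) * of_nat (card (B (n - i))))"
    by (simp add: fps_mult_nth theta_nth A_def B_def)
  also have "\<dots> = of_nat (\<Sum>i=0..n. card (A i \<times> B (n - i)))"
    by (simp add: card_cartesian_product)
  also have "(\<Sum>i=0..n. card (A i \<times> B (n - i))) = card (\<Union>i\<in>{0..n}. A i \<times> B (n - i))"
    apply (rule card_UN_disjoint[symmetric])
      apply simp
     apply (simp add: finA finB)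
    apply (auto simp: A_def B_def)
    done
  also have "(\<Union>i\<in>{0..n}. A i \<times> B (n - i)) = {p\<in>S \<times> T. (\<lambda>(x, y). e x + f y) p = int n}"
  proof (rule set_eqI, rule iffI)
    fix p assume "p \<in> (\<Union>i\<in>{0..n}. A i \<times> B (n - i))"
    then show "p \<in> {p\<in>S \<times> T. (\<lambda>(x, y). e x + f y) p = int n}" by (auto simp: A_def B_def)
  next
    fix p assume p: "p \<in> {p\<in>S \<times> T. (\<lambda>(x, y). e x + f y) p = int n}"
    obtain x y where xy: "p = (x, y)" by force
    have ex: "e x = int (nat (e x))" "f y = int (nat (f y))" using assms(3,4) by auto
    have ex0: "0 \<le> e x" "0 \<le> f y" using assms(3,4) by auto
    have sm: "e x + f y = int n" using p xy by auto
    have le: "nat (e x) \<le> n" using ex0 sm by (simp add: nat_le_iff)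
    have "nat (e x) \<le> n" "f y = int (n - nat (e x))" using ex0 sm le by (simp_all add: of_nat_diff)
    then show "p \<in> (\<Union>i\<in>{0..n}. A i \<times> B (n - i))" using p xy ex
      by (auto simp: A_def B_def intro!: bexI[of _ "nat (e x)"])
  qed
  finally show "(theta S e * theta T f) $ n = theta (S \<times> T) (\<lambda>(x, y). e x + f y) $ n"
    by (simp add: theta_nth)
qed

lemma proper_int: "(\<And>k::int. \<bar>k\<bar> \<le> e k) \<Longrightarrow> proper e"
  unfolding proper_def
proof
  fix N assume h: "\<And>k::int. \<bar>k\<bar> \<le> e k"
  show "finite {x. e x \<le> N}"
    by (rule finite_subset[of _ "{-N..N}"]) (use h in \<open>auto simp: abs_le_iff\<close>, (smt (verit) h)+)
qed

lemma proper_int2: "(\<And>j k::int. \<bar>j\<bar> + \<bar>k\<bar> \<le> e (j, k)) \<Longrightarrow> proper e"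
  unfolding proper_def
proof
  fix N assume h: "\<And>j k::int. \<bar>j\<bar> + \<bar>k\<bar> \<le> e (j, k)"
  have "{p. e p \<le> N} \<subseteq> {-N..N} \<times> {-N..N}"
  proof
    fix p assume "p \<in> {p. e p \<le> N}"
    moreover obtain j k where "p = (j, k)" by force
    ultimately show "p \<in> {-N..N} \<times> {-N..N}" using h[of j k] by auto
  qed
  then show "finite {p. e p \<le> N}" by (rule finite_subset) auto
qed

lemma proper_inj: "proper e \<Longrightarrow> inj h \<Longrightarrow> proper (\<lambda>x. e (h x))"
  unfolding proper_def
proof
  fix N assume "\<forall>N. finite {x. e x \<le> N}" "inj h"
  then have "finite (h -` {x. e x \<le> N})" by (intro finite_vimageI) auto
  then show "finite {x. e (h x) \<le> N}" by (simp add: vimage_def)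
qed

lemma prod_a: "LL (2 * d) d N * Pr (2 * d + d) N = Pr d (3 * N)"
proof (induction N)
  case 0 then show ?case by (simp add: LL_def)
next
  case (Suc N)
  have e3: "3 * Suc N = Suc (Suc (Suc (3 * N)))" by simp
  have x1: "2 * d + N * (2 * d + d) = d * Suc (Suc (3 * N))" by (simp add: algebra_simps)
  have x2: "d + N * (2 * d + d) = d * Suc (3 * N)" by (simp add: algebra_simps)
  have x3: "(2 * d + d) * Suc N = d * Suc (Suc (Suc (3 * N)))" by (simp add: algebra_simps)
  have "LL (2 * d) d (Suc N) * Pr (2 * d + d) (Suc N)
      = (LL (2 * d) d N * Pr (2 * d + d) N) * ((1 + fps_X ^ (d * Suc (Suc (3 * N)))) * (1 + fps_X ^ (d * Suc (3 * N))) * (1 + fps_X ^ (d * Suc (Suc (Suc (3 * N))))))"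
    unfolding LL_Suc Pr_Suc x1 x2 x3 by (simp only: mult_ac)
  also have "\<dots> = Pr d (3 * Suc N)"
    unfolding Suc.IH e3 Pr_Suc by (simp only: mult_ac)
  finally show ?case .
qed

lemma prod_b: "LL (3 * d) d N * Pr (2 * d) (2 * N) = Pr d (4 * N)"
proof (induction N)
  case 0 then show ?case by (simp add: LL_def)
next
  case (Suc N)
  have e4: "4 * Suc N = Suc (Suc (Suc (Suc (4 * N))))" by simp
  have e2: "2 * Suc N = Suc (Suc (2 * N))" by simp
  have x1: "3 * d + N * (3 * d + d) = d * Suc (Suc (Suc (4 * N)))" by (simp add: algebra_simps)
  have x2: "d + N * (3 * d + d) = d * Suc (4 * N)" by (simp add: algebra_simps)
  have x3: "2 * d * Suc (2 * N) = d * Suc (Suc (4 * N))" by (simp add: algebra_simps)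
  have x4: "2 * d * Suc (Suc (2 * N)) = d * Suc (Suc (Suc (Suc (4 * N))))" by (simp add: algebra_simps)
  have "LL (3 * d) d (Suc N) * Pr (2 * d) (2 * Suc N)
      = (LL (3 * d) d N * Pr (2 * d) (2 * N)) * ((1 + fps_X ^ (d * Suc (Suc (Suc (4 * N))))) * (1 + fps_X ^ (d * Suc (4 * N)))
          * (1 + fps_X ^ (d * Suc (Suc (4 * N)))) * (1 + fps_X ^ (d * Suc (Suc (Suc (Suc (4 * N)))))))"
    unfolding LL_Suc e2 Pr_Suc x1 x2 x3 x4 by (simp only: mult_ac)
  also have "\<dots> = Pr d (4 * Suc N)"
    unfolding Suc.IH e4 Pr_Suc by (simp only: mult_ac)
  finally show ?case .
qed

lemma ident_a:
  assumes d: "d \<ge> 1"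
  shows "P d = theta UNIV (ee (2 * d) d)"
proof (rule agree_all)
  fix n
  have "agree n (P d) (Pr d (3 * (2 * n)))" using d by (intro P_agree) auto
  moreover have "agree n (LL (2 * d) d (2 * n) * Pr (2 * d + d) (2 * n)) (theta UNIV (ee (2 * d) d))"
    using d by (intro JTP) auto
  ultimately show "agree n (P d) (theta UNIV (ee (2 * d) d))"
    unfolding prod_a by (rule agree_trans)
qed

lemma P_quad: "d \<ge> 1 \<Longrightarrow> P (4 * d) = P d ^ 4"
proof -
  assume d: "d \<ge> 1"
  have "P (4 * d) = P (2 * (2 * d))" by simp
  also have "\<dots> = (P (2 * d))^2" using d by (intro P_double) auto
  also have "\<dots> = (P d)^4" using P_double[OF d] by (simp add: power_mult[symmetric])
  finally show ?thesis .
qed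

lemma ident_b:
  assumes d: "d \<ge> 1"
  shows "P d ^ 3 = theta UNIV (ee (3 * d) d)"
proof (rule agree_all)
  fix n :: nat
  define N where "N = 2 * n"
  define Th where "Th = theta UNIV (ee (3 * d) d)"
  have j: "agree n (LL (3 * d) d N * Pr (3 * d + d) N) Th"
    unfolding Th_def N_def using d by (intro JTP) auto
  have p2: "agree n (Pr (2 * d) (2 * N)) (P (2 * d))"
    using d by (intro agree_sym[OF P_agree]) (auto simp: N_def)
  have "agree n (LL (3 * d) d N * Pr (3 * d + d) N * Pr (2 * d) (2 * N)) (Th * P (2 * d))"
    using j p2 by (rule agree_mult)
  moreover have "LL (3 * d) d N * Pr (3 * d + d) N * Pr (2 * d) (2 * N) = Pr d (4 * N) * Pr (4 * d) N"
    using prod_b[of d N] by (simp add: ac_simps)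
  moreover have "agree n (Pr d (4 * N) * Pr (4 * d) N) (P d * P (4 * d))"
    using d by (intro agree_mult agree_sym[OF P_agree]) (auto simp: N_def)
  ultimately have "agree n (Th * P (2 * d)) (P d * P (4 * d))"
    by (metis agree_sym agree_trans)
  moreover have "P d * P (4 * d) = P d ^ 3 * (P d)^2"
    using P_quad[OF d] by (simp add: power_Suc[symmetric] power_add[symmetric])
  moreover have "P (2 * d) = (P d)^2" using P_double[OF d] .
  ultimately have "agree n (Th * (P d)^2) (P d ^ 3 * (P d)^2)" by simp
  moreover have "((P d)^2) $ 0 \<noteq> 0" by (simp add: fps_power_zeroth)
  ultimately have "agree n Th (P d ^ 3)" by (rule agree_cancel)
  then show "agree n (P d ^ 3) (theta UNIV (ee (3 * d) d))" unfolding Th_def by (rule agree_sym)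
qed



lemma Tri2: "2 * Tri k = k * (k + 1)"
  unfolding Tri_def by simp

lemma ee3: "ee (3 * d) d k = int d * (2 * k * k + k)"
proof -
  have "2 * ee (3 * d) d k = int (3 * d) * (2 * Tri k) + int d * (2 * Tri (k - 1))"
    by (simp add: ee_def algebra_simps)
  also have "\<dots> = int (3 * d) * (k * (k + 1)) + int d * ((k - 1) * k)"
    using Tri2[of k] Tri2[of "k - 1"] by simp
  also have "\<dots> = 2 * (int d * (2 * k * k + k))" by (simp add: algebra_simps)
  finally show ?thesis by simp
qed

lemma ee2: "2 * ee (2 * d) d k = int d * (3 * k * k + k)"
proof -
  have "2 * ee (2 * d) d k = int (2 * d) * (2 * Tri k) + int d * (2 * Tri (k - 1))"
    by (simp add: ee_def algebra_simps)
  also have "\<dots> = int (2 * d) * (k * (k + 1)) + int d * ((k - 1) * k)"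
    using Tri2[of k] Tri2[of "k - 1"] by simp
  also have "\<dots> = int d * (3 * k * k + k)" by (simp add: algebra_simps)
  finally show ?thesis .
qed

lemma mm_nonneg: "(m::int) * m + m \<ge> 0"
  using Tri2[of m] Tri_nonneg[of m] by (simp add: algebra_simps)

lemma abs_le_tri: "\<bar>m::int\<bar> \<le> 2 * m * m + m"
  using abs_le_sq[of m] mm_nonneg[of m] by simp

lemma tri_nonneg: "0 \<le> 2 * (k::int) * k + k"
  using abs_le_tri[of k] by linarith

lemma abs_le_tri3: "\<bar>k::int\<bar> \<le> int 3 * (2 * k * k + k)"
proof -
  have l: "a \<le> x \<Longrightarrow> 0 \<le> x \<Longrightarrow> a \<le> 3 * (x::int)" for a x by linarith
  show ?thesis unfolding of_nat_numeral by (rule l[OF abs_le_tri tri_nonneg])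
qed

lemma neg_self: "(-(k::int) = k) = (k = 0)" by arith

definition psi :: "nat \<Rightarrow> bit fps" where
  "psi d = theta UNIV (\<lambda>k. int d * (2 * k * k + k))"

lemma psi_P: "d \<ge> 1 \<Longrightarrow> P d ^ 3 = psi d"
proof -
  assume d: "d \<ge> 1"
  have "ee (3 * d) d = (\<lambda>k. int d * (2 * k * k + k))" by (rule ext) (rule ee3)
  then show ?thesis using ident_b[OF d] by (simp add: psi_def)
qed

lemma div4: "0 \<le> c \<Longrightarrow> c < 4 \<Longrightarrow> (4 * k + c) div 4 = (k::int) \<and> (4 * k + c) mod 4 = c"
  by (simp add: add.commute)

definition E2 :: "int \<times> int \<Rightarrow> int" where
  "E2 = (\<lambda>(m, n). (2 * m * m + m) + 3 * (2 * n * n + n))"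

lemma E2_proper: "proper E2"
  unfolding E2_def
proof (rule proper_int2)
  fix j k :: int
  show "\<bar>j\<bar> + \<bar>k\<bar> \<le> (case (j, k) of (m, n) \<Rightarrow> 2 * m * m + m + 3 * (2 * n * n + n))"
    using abs_le_tri[of j] abs_le_tri[of k] mm_nonneg[of k] by simp
qed

lemma psi13: "psi 1 * psi 3 = theta UNIV E2"
proof -
  have "psi 1 * psi 3 = theta (UNIV \<times> UNIV) (\<lambda>(x, y). int 1 * (2 * x * x + x) + int 3 * (2 * y * y + y))"
    unfolding psi_def
  proof (rule theta_mult)
    show "proper (\<lambda>k::int. int 1 * (2 * k * k + k))" by (rule proper_int) (simp add: abs_le_tri)
    show "proper (\<lambda>k::int. int 3 * (2 * k * k + k))"
      by (rule proper_int) (rule abs_le_tri3)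
    show "0 \<le> int 1 * (2 * x * x + x)" for x :: int using tri_nonneg[of x] by simp
    show "0 \<le> int 3 * (2 * x * x + x)" for x :: int unfolding of_nat_numeral using tri_nonneg[of x] by simp
  qed
  then show ?thesis by (simp add: E2_def)
qed

definition ph0 :: "int \<times> int \<Rightarrow> int \<times> int" where "ph0 = (\<lambda>(j, k). (j + 3 * k, j - k))"
definition ph1 :: "int \<times> int \<Rightarrow> int \<times> int" where "ph1 = (\<lambda>(j, k). (j + 3 * k + 1, j - k))"
definition ph2 :: "int \<times> int \<Rightarrow> int \<times> int" where "ph2 = (\<lambda>(j, k). (j + 3 * k + 2, j - k))"
definition ph3 :: "int \<times> int \<Rightarrow> int \<times> int" where "ph3 = (\<lambda>(j, k). (j + 3 * k + 2, j - k - 1))"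

definition Rc :: "int \<Rightarrow> (int \<times> int) set" where "Rc c = {p. (fst p - snd p) mod 4 = c}"

lemma bij_ph:
  assumes "ph = (\<lambda>(j, k). (j + 3 * k + c, j - k - d))" "c + d \<ge> 0" "c + d < 4"
  shows "bij_betw ph UNIV (Rc (c + d))"
proof (rule bij_betw_byWitness[where f'="\<lambda>(m, n). (n + (m - n) div 4 + d, (m - n) div 4)"])
  show "\<forall>a\<in>UNIV. (\<lambda>(m, n). (n + (m - n) div 4 + d, (m - n) div 4)) (ph a) = a"
  proof
    fix a :: "int \<times> int" obtain j k where a: "a = (j, k)" by force
    have e: "j + 3 * k + c - (j - k - d) = 4 * k + (c + d)" by simp
    show "(\<lambda>(m, n). (n + (m - n) div 4 + d, (m - n) div 4)) (ph a) = a"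
      unfolding a assms(1) using div4[OF assms(2,3), of k] e by simp
  qed
  show "\<forall>a'\<in>Rc (c + d). ph ((\<lambda>(m, n). (n + (m - n) div 4 + d, (m - n) div 4)) a') = a'"
  proof
    fix a' assume "a' \<in> Rc (c + d)"
    moreover obtain m n where a': "a' = (m, n)" by force
    ultimately have md: "(m - n) mod 4 = c + d" by (simp add: Rc_def)
    have "m - n = 4 * ((m - n) div 4) + (m - n) mod 4" by simp
    then have "m - n = 4 * ((m - n) div 4) + (c + d)" using md by simp
    then show "ph ((\<lambda>(m, n). (n + (m - n) div 4 + d, (m - n) div 4)) a') = a'"
      unfolding a' assms(1) by simp
  qed
  show "ph ` UNIV \<subseteq> Rc (c + d)"
  proof
    fix p assume "p \<in> ph ` UNIV"
    then obtain j k where p: "p = ph (j, k)" by auto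
    have e: "j + 3 * k + c - (j - k - d) = 4 * k + (c + d)" by simp
    show "p \<in> Rc (c + d)" unfolding p assms(1) Rc_def using div4[OF assms(2,3), of k] e by simp
  qed
  show "(\<lambda>(m, n). (n + (m - n) div 4 + d, (m - n) div 4)) ` Rc (c + d) \<subseteq> UNIV" by simp
qed

lemma bij0: "bij_betw ph0 UNIV (Rc 0)"
  using bij_ph[of ph0 0 0] by (simp add: ph0_def)
lemma bij1: "bij_betw ph1 UNIV (Rc 1)"
  using bij_ph[of ph1 1 0] by (simp add: ph1_def)
lemma bij2: "bij_betw ph2 UNIV (Rc 2)"
  using bij_ph[of ph2 2 0] by (simp add: ph2_def)
lemma bij3: "bij_betw ph3 UNIV (Rc 3)"
  using bij_ph[of ph3 2 1] by (simp add: ph3_def)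

lemma Rc_union: "UNIV = Rc 0 \<union> (Rc 1 \<union> (Rc 2 \<union> Rc 3))"
proof -
  have "(x::int) mod 4 \<in> {0, 1, 2, 3}" for x by auto
  then show ?thesis unfolding Rc_def by auto
qed

lemma theta_Rc: "theta (Rc c) E2 = theta UNIV (\<lambda>p. E2 (ph p))" if "bij_betw ph UNIV (Rc c)" for ph c
  by (rule theta_bij[OF that, symmetric]) simp

lemma proper_comp: "bij_betw ph UNIV R \<Longrightarrow> proper (\<lambda>p. E2 (ph p))"
  by (rule proper_inj[OF E2_proper]) (simp add: bij_betw_def)

lemma class1: "theta (Rc 1) E2 = 0"
proof -
  have "theta (Rc 1) E2 = theta UNIV (\<lambda>p. E2 (ph1 p))" by (rule theta_Rc[OF bij1])
  also have "\<dots> = theta {p \<in> UNIV. (\<lambda>(j, k). (- 1 - j, k)) p = p} (\<lambda>p. E2 (ph1 p))"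
  proof (rule theta_inv)
    show "proper (\<lambda>p. E2 (ph1 p))" by (rule proper_comp[OF bij1])
    fix p :: "int \<times> int" obtain j k where "p = (j, k)" by force
    then show "(\<lambda>(j, k). (- 1 - j, k)) p \<in> UNIV \<and> (\<lambda>(j, k). (- 1 - j, k)) ((\<lambda>(j, k). (- 1 - j, k)) p) = p
      \<and> E2 (ph1 ((\<lambda>(j, k). (- 1 - j, k)) p)) = E2 (ph1 p)"
      by (simp add: E2_def ph1_def algebra_simps)
  qed
  also have "{p \<in> UNIV. (\<lambda>(j, k). (- 1 - j, k)) p = p} = ({} :: (int \<times> int) set)" by (auto; presburger)
  finally show ?thesis by simp
qed

lemma class2: "theta (Rc 2) E2 = 0"
proof -
  have "theta (Rc 2) E2 = theta UNIV (\<lambda>p. E2 (ph2 p))" by (rule theta_Rc[OF bij2])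
  also have "\<dots> = theta {p \<in> UNIV. (\<lambda>(j, k). (j, - 1 - k)) p = p} (\<lambda>p. E2 (ph2 p))"
  proof (rule theta_inv)
    show "proper (\<lambda>p. E2 (ph2 p))" by (rule proper_comp[OF bij2])
    fix p :: "int \<times> int" obtain j k where "p = (j, k)" by force
    then show "(\<lambda>(j, k). (j, - 1 - k)) p \<in> UNIV \<and> (\<lambda>(j, k). (j, - 1 - k)) ((\<lambda>(j, k). (j, - 1 - k)) p) = p
      \<and> E2 (ph2 ((\<lambda>(j, k). (j, - 1 - k)) p)) = E2 (ph2 p)"
      by (simp add: E2_def ph2_def algebra_simps)
  qed
  also have "{p \<in> UNIV. (\<lambda>(j, k). (j, - 1 - k)) p = p} = ({} :: (int \<times> int) set)" by (auto; presburger)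
  finally show ?thesis by simp
qed

lemma class0: "theta (Rc 0) E2 = psi 4"
proof -
  have "theta (Rc 0) E2 = theta UNIV (\<lambda>p. E2 (ph0 p))" by (rule theta_Rc[OF bij0])
  also have "\<dots> = theta {p \<in> UNIV. (\<lambda>(j, k). (j, - k)) p = p} (\<lambda>p. E2 (ph0 p))"
  proof (rule theta_inv)
    show "proper (\<lambda>p. E2 (ph0 p))" by (rule proper_comp[OF bij0])
    fix p :: "int \<times> int" obtain j k where "p = (j, k)" by force
    then show "(\<lambda>(j, k). (j, - k)) p \<in> UNIV \<and> (\<lambda>(j, k). (j, - k)) ((\<lambda>(j, k). (j, - k)) p) = p
      \<and> E2 (ph0 ((\<lambda>(j, k). (j, - k)) p)) = E2 (ph0 p)"
      by (simp add: E2_def ph0_def algebra_simps)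
  qed
  also have "{p \<in> (UNIV :: (int \<times> int) set). (\<lambda>(j, k). (j, - k)) p = p} = (\<lambda>j. (j, 0)) ` (UNIV :: int set)"
    by (auto simp: image_iff neg_self)
  also have "theta ((\<lambda>j. (j, 0)) ` (UNIV :: int set)) (\<lambda>p. E2 (ph0 p)) = psi 4"
    unfolding psi_def
    by (rule theta_bij[symmetric]) (auto simp: bij_betw_def inj_def E2_def ph0_def algebra_simps)
  finally show ?thesis .
qed

lemma class3: "theta (Rc 3) E2 = fps_X * psi 12"
proof -
  have "theta (Rc 3) E2 = theta UNIV (\<lambda>p. E2 (ph3 p))" by (rule theta_Rc[OF bij3])
  also have "\<dots> = theta {p \<in> UNIV. (\<lambda>(j, k). (- j, k)) p = p} (\<lambda>p. E2 (ph3 p))"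
  proof (rule theta_inv)
    show "proper (\<lambda>p. E2 (ph3 p))" by (rule proper_comp[OF bij3])
    fix p :: "int \<times> int" obtain j k where "p = (j, k)" by force
    then show "(\<lambda>(j, k). (- j, k)) p \<in> UNIV \<and> (\<lambda>(j, k). (- j, k)) ((\<lambda>(j, k). (- j, k)) p) = p
      \<and> E2 (ph3 ((\<lambda>(j, k). (- j, k)) p)) = E2 (ph3 p)"
      by (simp add: E2_def ph3_def algebra_simps)
  qed
  also have "{p \<in> (UNIV :: (int \<times> int) set). (\<lambda>(j, k). (- j, k)) p = p} = (\<lambda>k. (0, k)) ` (UNIV :: int set)"
    by (auto simp: image_iff neg_self)
  also have "theta ((\<lambda>k. (0, k)) ` (UNIV :: int set)) (\<lambda>p. E2 (ph3 p)) = theta UNIV (\<lambda>k. 24 * k * k + 36 * k + 13)"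
    by (rule theta_bij[where h="\<lambda>k. (0, k)", symmetric]) (auto simp: bij_betw_def inj_def E2_def ph3_def algebra_simps)
  also have "\<dots> = theta UNIV (\<lambda>k. int 12 * (2 * k * k + k) + 1)"
  proof (rule theta_bij[where h="\<lambda>k. - k - 1"])
    show "bij_betw (\<lambda>k::int. - k - 1) UNIV UNIV"
      by (rule bij_betw_byWitness[where f'="\<lambda>k. - k - 1"]) auto
  qed (simp add: algebra_simps)
  also have "\<dots> = fps_X * psi 12"
    unfolding psi_def by (rule theta_shift[symmetric]) (rule mult_nonneg_nonneg, simp, rule tri_nonneg)
  finally show ?thesis .
qed

lemma schroeter: "psi 1 * psi 3 = psi 4 + fps_X * psi 12"
proof -
  have d1: "Rc 0 \<inter> (Rc 1 \<union> (Rc 2 \<union> Rc 3)) = {}" "Rc 1 \<inter> (Rc 2 \<union> Rc 3) = {}" "Rc 2 \<inter> Rc 3 = {}"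
    by (auto simp: Rc_def)
  have "psi 1 * psi 3 = theta (Rc 0 \<union> (Rc 1 \<union> (Rc 2 \<union> Rc 3))) E2"
    unfolding psi13 Rc_union[symmetric] ..
  also have "\<dots> = theta (Rc 0) E2 + (theta (Rc 1) E2 + (theta (Rc 2) E2 + theta (Rc 3) E2))"
    using d1 E2_proper by (simp add: theta_union)
  also have "\<dots> = psi 4 + fps_X * psi 12" by (simp add: class0 class1 class2 class3)
  finally show ?thesis .
qed



definition cond :: "nat \<Rightarrow> bool" where
  "cond n \<longleftrightarrow> n = 0 \<or> ((\<exists>m::nat. n = m ^ 2) \<and> \<not> (3 dvd n))"

definition Gs :: "bit fps" where
  "Gs = Abs_fps (\<lambda>n. if cond n then 1 else 0)"

definition good :: "nat \<Rightarrow> bool" where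
  "good n \<longleftrightarrow> (\<exists>m::nat. n = m ^ 2 \<and> odd m \<and> \<not> 3 dvd m)"

lemma three_sq: "3 dvd (m::nat)^2 \<longleftrightarrow> 3 dvd m"
proof
  assume h: "3 dvd m^2"
  show "3 dvd m"
  proof (rule ccontr)
    assume "\<not> 3 dvd m"
    then have "m mod 3 = 1 \<or> m mod 3 = 2" by presburger
    moreover have "(m mod 3)^2 mod 3 = m^2 mod 3" by (rule power_mod)
    ultimately have "m^2 mod 3 = 1" by auto
    with h show False by auto
  qed
qed auto

lemma sq_inj: "(m::nat)^2 = m'^2 \<Longrightarrow> m = m'"
  by (simp add: power2_eq_iff_nonneg)

lemma card_good: "card {k::int. (6 * k + 1)^2 = int n} = (if good n then 1 else 0)"
proof (cases "good n")
  case True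
  then obtain m :: nat where m: "n = m^2" "odd m" "\<not> 3 dvd m" unfolding good_def by auto
  obtain q :: int where q: "int m = 6 * q + 1 \<or> int m = 6 * q + 5" using m(2,3)
    by (intro that[of "int m div 6"]) presburger
  obtain k0 :: int where k0: "int m = 6 * k0 + 1 \<or> - int m = 6 * k0 + 1"
  proof (cases "int m = 6 * q + 1")
    case True then show ?thesis using that[of q] by simp
  next
    case False then have "- int m = 6 * (- q - 1) + 1" using q by simp
    then show ?thesis using that[of "- q - 1"] by simp
  qed
  have "{k::int. (6 * k + 1)^2 = int n} = {k0}"
  proof (rule set_eqI)
    fix k :: int
    have "(6 * k + 1)^2 = int n \<longleftrightarrow> (6 * k + 1)^2 = (int m)^2" using m(1) by simp
    also have "\<dots> \<longleftrightarrow> 6 * k + 1 = int m \<or> 6 * k + 1 = - int m" by (rule power2_eq_iff)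
    also have "\<dots> \<longleftrightarrow> k = k0" using k0 by presburger
    finally show "k \<in> {k::int. (6 * k + 1)^2 = int n} \<longleftrightarrow> k \<in> {k0}" by simp
  qed
  then show ?thesis using True by simp
next
  case False
  have "{k::int. (6 * k + 1)^2 = int n} = {}"
  proof (rule ccontr)
    assume "{k::int. (6 * k + 1)^2 = int n} \<noteq> {}"
    then obtain k :: int where k: "(6 * k + 1)^2 = int n" by auto
    define m where "m = nat \<bar>6 * k + 1\<bar>"
    have "int (m^2) = (6 * k + 1)^2" unfolding m_def by simp
    then have "n = m^2" using k by simp
    moreover have "odd m" "\<not> 3 dvd m"
    proof -
      have im: "int m = \<bar>6 * k + 1\<bar>" unfolding m_def by simp
      have "odd (int m)" unfolding im by presburger
      then show "odd m" by simp
      have "\<not> 3 dvd int m" unfolding im by presburger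
      then show "\<not> 3 dvd m" by (metis int_dvd_int_iff of_nat_numeral)
    qed
    ultimately show False using False unfolding good_def by auto
  qed
  then show ?thesis using False by simp
qed

lemma cond_sum: "((if cond n then 1 else 0) + (if 4 dvd n then (if cond (n div 4) then 1 else 0) else 0) :: bit)
    = (if good n then 1 else 0)"
proof (cases "n = 0")
  case True
  then show ?thesis by (simp add: cond_def good_def)
next
  case n0: False
  show ?thesis
  proof (cases "\<exists>m::nat. n = m^2")
    case False
    have c1: "\<not> cond n" using False n0 by (simp add: cond_def)
    have c2: "\<not> (4 dvd n \<and> cond (n div 4))"
    proof
      assume h: "4 dvd n \<and> cond (n div 4)"
      then have "n div 4 \<noteq> 0" using n0 by auto
      with h obtain l :: nat where "n div 4 = l^2" by (auto simp: cond_def)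
      then have "n = (2 * l)^2" using h by (auto simp: power_mult_distrib)
      with False show False by blast
    qed
    have "\<not> good n" using False by (auto simp: good_def)
    then show ?thesis using c1 c2 by auto
  next
    case True
    then obtain m :: nat where m: "n = m^2" by auto
    have m0: "m > 0" using n0 m by auto
    have sq4: "4 dvd n \<longleftrightarrow> even m"
    proof
      assume "4 dvd n"
      then have "even (m^2)" using m by (metis dvd_trans even_numeral)
      then show "even m" by simp
    next
      assume "even m"
      then obtain l where "m = 2 * l" by auto
      then show "4 dvd n" using m by (simp add: power_mult_distrib)
    qed
    have goodiff: "good n \<longleftrightarrow> odd m \<and> \<not> 3 dvd m"
      using m sq_inj unfolding good_def by blast
    show ?thesis
    proof (cases "3 dvd m")
      case True
      have c1: "\<not> cond n" using True n0 m three_sq by (simp add: cond_def)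
      have c2: "\<not> (4 dvd n \<and> cond (n div 4))"
      proof
        assume h: "4 dvd n \<and> cond (n div 4)"
        then obtain l where l: "m = 2 * l" using sq4 by auto
        then have nd: "n div 4 = l^2" using m by (simp add: power_mult_distrib)
        have "3 dvd l" using True l by presburger
        then have "3 dvd n div 4" unfolding nd by (simp add: three_sq)
        moreover have "n div 4 \<noteq> 0" using nd l m0 by auto
        ultimately show False using h by (simp add: cond_def)
      qed
      show ?thesis using c1 c2 goodiff True by auto
    next
      case False
      have c1: "cond n" using False m three_sq by (auto simp: cond_def)
      show ?thesis
      proof (cases "even m")
        case True
        then obtain l where l: "m = 2 * l" by auto
        then have nd: "n div 4 = l^2" using m by (simp add: power_mult_distrib)
        have "\<not> 3 dvd l" using False l by presburger
        then have "\<not> 3 dvd (n div 4)" unfolding nd using three_sq by simp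
        then have "cond (n div 4)" using nd by (auto simp: cond_def)
        then show ?thesis using c1 sq4 True goodiff by simp
      next
        case False
        then show ?thesis using c1 sq4 goodiff \<open>\<not> 3 dvd m\<close> by simp
      qed
    qed
  qed
qed

lemma frob4_nth: "((F::bit fps)^4) $ n = (if 4 dvd n then F $ (n div 4) else 0)"
proof -
  have "(F^4) $ n = ((F^2)^2) $ n" by (simp add: power_mult[symmetric])
  also have "\<dots> = (if even n then (F^2) $ (n div 2) else 0)" by (rule frob_nth)
  also have "\<dots> = (if 4 dvd n then F $ (n div 4) else 0)"
  proof -
    have d: "4 dvd n \<longleftrightarrow> even n \<and> even (n div 2)" by presburger
    have e: "n div 2 div 2 = n div 4" by (simp add: div_mult2_eq)
    show ?thesis unfolding d e by (simp add: frob_nth e)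
  qed
  finally show ?thesis .
qed

lemma ee48: "ee (2 * 24) 24 k + 1 = (6 * k + 1)^2"
  using ee2[of 24 k] by (simp add: power2_eq_square algebra_simps)

lemma Gs_eq: "Gs + Gs^4 = fps_X * P 24"
proof (rule fps_ext)
  fix n
  have "P 24 = theta UNIV (ee (2 * 24) 24)" using ident_a[of 24] by simp
  then have "fps_X * P 24 = theta UNIV (\<lambda>k. ee (2 * 24) 24 k + 1)"
    using theta_shift[of UNIV "ee (2 * 24) 24"] ee_nonneg by simp
  also have "\<dots> = theta UNIV (\<lambda>k. (6 * k + 1)^2)" by (simp only: ee48)
  finally have "(fps_X * P 24) $ n = of_nat (card {k::int. (6 * k + 1)^2 = int n})"
    by (simp add: theta_nth)
  also have "\<dots> = (if good n then 1 else 0)" by (simp add: card_good)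
  also have "\<dots> = (Gs + Gs^4) $ n" by (simp add: frob4_nth Gs_def cond_sum[symmetric])
  finally show "(Gs + Gs^4) $ n = (fps_X * P 24) $ n" ..
qed



definition ev :: "bit fps \<Rightarrow> bit fps" where "ev F = Abs_fps (\<lambda>n. F $ (2 * n))"
definition comp2 :: "bit fps \<Rightarrow> bit fps" where
  "comp2 G = Abs_fps (\<lambda>m. if even m then G $ (m div 2) else 0)"

lemma sq_comp2: "G^2 = comp2 G"
  by (rule fps_ext) (simp add: frob_nth comp2_def)

lemma ev_add: "ev (F + G) = ev F + ev G" by (rule fps_ext) (simp add: ev_def)
lemma ev_one: "ev 1 = 1" by (rule fps_ext) (simp add: ev_def)

lemma ev_X_comp2: "ev (fps_X * comp2 G) = 0"
proof (rule fps_ext)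
  fix n
  show "ev (fps_X * comp2 G) $ n = 0 $ n"
  proof (cases n)
    case 0 then show ?thesis by (simp add: ev_def)
  next
    case (Suc m)
    then have "2 * n = Suc (2 * m + 1)" by simp
    then show ?thesis by (simp add: ev_def comp2_def)
  qed
qed

lemma ev_mult_comp2: "ev (F * comp2 G) = ev F * G"
proof (rule fps_ext)
  fix n
  have "ev (F * comp2 G) $ n = (\<Sum>i=0..2*n. F $ i * comp2 G $ (2 * n - i))"
    by (simp add: ev_def fps_mult_nth)
  also have "\<dots> = (\<Sum>i\<in>(\<lambda>j. 2 * j) ` {0..n}. F $ i * comp2 G $ (2 * n - i))"
  proof (rule sum.mono_neutral_right)
    show "(\<lambda>j. 2 * j) ` {0..n} \<subseteq> {0..2 * n}" by auto
    show "\<forall>i\<in>{0..2 * n} - (\<lambda>j. 2 * j) ` {0..n}. F $ i * comp2 G $ (2 * n - i) = 0"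
    proof
      fix i assume i: "i \<in> {0..2 * n} - (\<lambda>j. 2 * j) ` {0..n}"
      then have "odd i"
        by (auto elim!: evenE)
      then have "odd (2 * n - i)" using i by auto
      then show "F $ i * comp2 G $ (2 * n - i) = 0" by (simp add: comp2_def)
    qed
  qed simp
  also have "\<dots> = (\<Sum>j=0..n. F $ (2 * j) * comp2 G $ (2 * n - 2 * j))"
    by (subst sum.reindex) (auto simp: inj_on_def)
  also have "\<dots> = (\<Sum>j=0..n. ev F $ j * G $ (n - j))"
  proof (rule sum.cong)
    fix j assume "j \<in> {0..n}"
    then have "2 * n - 2 * j = 2 * (n - j)" by simp
    then show "F $ (2 * j) * comp2 G $ (2 * n - 2 * j) = ev F $ j * G $ (n - j)"
      by (simp add: comp2_def ev_def)
  qed simp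
  also have "\<dots> = (ev F * G) $ n" by (simp add: fps_mult_nth)
  finally show "ev (F * comp2 G) $ n = (ev F * G) $ n" .
qed

lemma sq_add_bit: "((a::bit fps) + b)^2 = a^2 + b^2"
proof -
  have "(a + b)^2 = a^2 + b^2 + 2 * a * b" by (rule power2_sum)
  then show ?thesis by (simp add: two_bitfps)
qed

lemma pow4_add_bit: "((a::bit fps) + b)^4 = a^4 + b^4"
proof -
  have "(a + b)^4 = ((a + b)^2)^2" by (simp add: power_mult[symmetric])
  also have "\<dots> = a^4 + b^4" by (simp add: sq_add_bit power_mult[symmetric])
  finally show ?thesis .
qed

lemma D_zero:
  assumes "D = (D::bit fps)^4" "D $ 0 = 0"
  shows "D = 0"
proof -
  have "D $ n = 0" for n
  proof (induction n rule: less_induct)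
    case (less n)
    show ?case
    proof (cases "n = 0")
      case True then show ?thesis using assms(2) by simp
    next
      case False
      have "D $ n = (D^4) $ n" using assms(1) by simp
      also have "\<dots> = (if 4 dvd n then D $ (n div 4) else 0)" by (rule frob4_nth)
      also have "\<dots> = 0" using less.IH[of "n div 4"] False by auto
      finally show ?thesis .
    qed
  qed
  then show ?thesis by (intro fps_ext) simp
qed

lemma red_eta: "red (eta_f r) = P r" by (simp add: P_def)

theorem main_bit: "(of_int (a_coeff (2 * n)) :: bit) = (if cond n then 1 else 0)"
proof -
  define P1 where "P1 = P 1"
  define P3 where "P3 = P 3"
  have P2: "P 2 = P1^2" unfolding P1_def using P_double[of 1] by simp
  have P4: "P 4 = P1^4" unfolding P1_def using P_quad[of 1] by simp
  have P6: "P 6 = P3^2" unfolding P3_def using P_double[of 3] by simp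
  have P12: "P 12 = P3^4" unfolding P3_def using P_quad[of 3] by simp
  have P24: "P 24 = P3^8"
  proof -
    have "P 24 = (P 12)^2" using P_double[of 12] by simp
    then show ?thesis using P12 by (simp add: power_mult[symmetric])
  qed
  have P1_0: "P1 $ 0 = 1" and P3_0: "P3 $ 0 = 1" by (simp_all add: P1_def P3_def)
  have P3nz: "P3 \<noteq> 0" using P3_0 by auto
  have P1nz: "P1 \<noteq> 0" using P1_0 by auto
  have cub: "P1^3 * P3^3 = P1^12 + fps_X * P3^12"
  proof -
    have "P1^3 * P3^3 = psi 1 * psi 3" using psi_P[of 1] psi_P[of 3] by (simp add: P1_def P3_def)
    also have "\<dots> = psi 4 + fps_X * psi 12" by (rule schroeter)
    also have "psi 4 = P1^12" using psi_P[of 4] P4 by (simp add: power_mult[symmetric])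
    also have "psi 12 = P3^12" using psi_P[of 12] P12 by (simp add: power_mult[symmetric])
    finally show ?thesis .
  qed
  define iP3 where "iP3 = inverse P3"
  have inv3: "P3 * iP3 = 1" unfolding iP3_def using P3_0 by (simp add: inverse_mult_eq_1')
  define Y where "Y = P1^3 * iP3"
  have Yeq: "Y = Y^4 + fps_X * P 24"
  proof -
    have p4: "P3^4 = P3^3 * P3" by (simp add: numeral_eq_Suc)
    have "Y * P3^4 = P1^3 * P3^3 * (P3 * iP3)" unfolding Y_def p4 by (simp only: mult_ac)
    also have "\<dots> = P1^12 + fps_X * P3^12" using cub inv3 by simp
    also have "\<dots> = (Y^4 + fps_X * P 24) * P3^4"
    proof -
      have "(Y^4 + fps_X * P 24) * P3^4 = P1^12 * (P3 * iP3)^4 + fps_X * P3^12"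
        unfolding Y_def P24 by (simp add: algebra_simps power_mult_distrib power_add[symmetric] power_mult[symmetric])
      then show ?thesis using inv3 by simp
    qed
    finally have "Y * P3^4 = (Y^4 + fps_X * P 24) * P3^4" .
    moreover have "P3^4 \<noteq> 0" using P3nz by simp
    ultimately show ?thesis by (metis mult_cancel_right)
  qed
  define A where "A = red gen_A"
  have A_eq: "A * P1^3 = P3"
  proof -
    have "red (gen_A * (eta_f 2 ^ 2 * eta_f 3)) = red (eta_f 1 * eta_f 6)" using gen_A_eq by simp
    then have "A * ((P 2)^2 * P 3) = P 1 * P 6" unfolding A_def by (simp add: red_mult red_power red_eta)
    then have h: "A * ((P1^2)^2 * P3) = P1 * P3^2" unfolding P2 P6 by (simp add: P1_def P3_def)
    have q1: "(P1^2)^2 * P3 = P1^3 * (P1 * P3)" by (simp add: power2_eq_square numeral_eq_Suc mult_ac)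
    have q2: "P1 * P3^2 = P3 * (P1 * P3)" by (simp add: power2_eq_square mult_ac)
    have "(A * P1^3) * (P1 * P3) = P3 * (P1 * P3)" using h unfolding q1 q2 by (simp only: mult_ac)
    moreover have "P1 * P3 \<noteq> 0" using P1nz P3nz by simp
    ultimately show ?thesis by (metis mult_cancel_right)
  qed
  have AY: "A * Y = 1" unfolding Y_def using A_eq inv3 by (simp add: mult.assoc[symmetric])
  have A3: "A^3 = 1 + fps_X * comp2 ((P3^2 * A)^2)"
  proof -
    have "A^3 * (A * Y) = (A * Y)^4 + fps_X * (P3^2 * A)^4"
    proof -
      have "A^4 * Y = A^4 * Y^4 + fps_X * (A^4 * P 24)"
        by (subst Yeq) (simp add: algebra_simps)
      moreover have e1: "A^3 * (A * Y) = A^4 * Y" by (simp add: numeral_eq_Suc mult_ac)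
      moreover have e2: "(A * Y)^4 = A^4 * Y^4" by (simp add: power_mult_distrib)
      moreover have e3: "(P3^2 * A)^4 = A^4 * P3^8" by (simp add: power_mult_distrib power_mult[symmetric] mult.commute)
      ultimately show ?thesis unfolding P24 by simp
    qed
    then have "A^3 = 1 + fps_X * (P3^2 * A)^4" using AY by simp
    also have "(P3^2 * A)^4 = comp2 ((P3^2 * A)^2)"
      by (simp add: sq_comp2[symmetric] power_mult[symmetric])
    finally show ?thesis .
  qed
  have evA: "ev A = Y"
  proof -
    have "A^3 = A * A^2" by (simp add: numeral_eq_Suc)
    then have "A^3 = A * comp2 A" by (simp only: sq_comp2)
    then have "ev (A^3) = ev A * A" by (simp add: ev_mult_comp2)
    moreover have "ev (A^3) = 1" unfolding A3 by (simp add: ev_add ev_one ev_X_comp2)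
    ultimately have "ev A * A = Y * A" using AY by (simp add: mult.commute)
    moreover have "A \<noteq> 0" using AY by auto
    ultimately show ?thesis by (metis mult_cancel_right)
  qed
  have YG: "Y = Gs"
  proof -
    define D where "D = Y + Gs"
    have G4: "Gs = Gs^4 + fps_X * P 24"
    proof -
      have "Gs^4 + fps_X * P 24 = Gs^4 + (Gs + Gs^4)" using Gs_eq by simp
      also have "\<dots> = Gs + (Gs^4 + Gs^4)" by (simp only: add_ac)
      finally show ?thesis by simp
    qed
    have "D = Y^4 + Gs^4 + (fps_X * P 24 + fps_X * P 24)"
      unfolding D_def by (subst Yeq, subst G4) (simp only: add_ac)
    also have "\<dots> = D^4" unfolding D_def pow4_add_bit by simp
    finally have DD: "D = D^4" .
    have "A $ 0 * Y $ 0 = 1" using arg_cong[OF AY, of "\<lambda>F. F $ 0"] by simp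
    then have "Y $ 0 = 1" by (cases "Y $ 0") simp_all
    moreover have "Gs $ 0 = 1" by (simp add: Gs_def cond_def)
    ultimately have "D $ 0 = 0" unfolding D_def by simp
    then have "D = 0" using DD D_zero by simp
    have "Y = (Y + Gs) + Gs" by (simp only: add.assoc bitfps_add_self add_0_right)
    also have "\<dots> = Gs" using \<open>D = 0\<close> unfolding D_def by simp
    finally show ?thesis .
  qed
  have "(of_int (a_coeff (2 * n)) :: bit) = A $ (2 * n)" by (simp add: A_def a_coeff_def)
  also have "\<dots> = ev A $ n" by (simp add: ev_def)
  also have "\<dots> = Gs $ n" using evA YG by simp
  finally show ?thesis by (simp add: Gs_def)
qed

theorem mainTheorem3:
  fixes n :: nat
  shows "a_coeff (2 * n) mod 2 =
           (if n = 0 \<or> ((\<exists>m::nat. n = m ^ 2) \<and> \<not> (3 dvd n)) then 1 else 0)"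
proof -
  have h: "(if even (a_coeff (2 * n)) then 0 else 1 :: bit) = (if cond n then 1 else 0)"
    using main_bit[of n] by (simp add: of_int_bit)
  show ?thesis
  proof (cases "cond n")
    case True
    then have "odd (a_coeff (2 * n))" using h by (auto split: if_splits)
    then show ?thesis using True by (simp add: cond_def odd_iff_mod_2_eq_one)
  next
    case False
    then have "even (a_coeff (2 * n))" using h by (auto split: if_splits)
    then show ?thesis using False by (simp add: cond_def even_iff_mod_2_eq_zero)
  qed
qed



end
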